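(* Let $q,r$ be coprime integers with $0<q\le r$, and let $K,N$ be integers with $1\le N\le K$ and $N\equiv 1\pmod r$. Call a partition $\lambda=(1^{k_1}2^{k_2}\cdots N^{k_N})\vdash N$ a permissible configuration if (C1) $\ell(\lambda)\le K$; (C2) $\ell(\lambda^* )\le r-q+1$ (no part exceeds $r-q+1$); and (C3) $\sum_{i\ge 2}k_i\le \frac{N-1}{r}\le\frac{K-1}{q}$. Then the number of permissible configurations is \[ \binom{(N-1)/r+r-q}{r-q}. \]
   Context: A partition $\lambda\vdash N$ is a non-increasing sequence of positive integers summing to $N$, written $\lambda=(1^{k_1}2^{k_2}\cdots N^{k_N})$ with $k_i$ the number of parts equal to $i$; $\ell(\lambda)=\sum_i k_i$ is its length, and $\lambda^*$ denotes the conjugate partition (transpose Ferrers diagram), so $\ell(\lambda^* )$ is the largest part of $\lambda$. *)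

theory Defs
  imports Complex_Main "HOL-Number_Theory.Cong"
begin

text \<open>A partition \<lambda> = (1^{k_1} 2^{k_2} ... N^{k_N}) of N is represented by its
multiplicity function k, where k i is the number of parts equal to i.\<close>

definition is_partition_mult :: "nat \<Rightarrow> (nat \<Rightarrow> nat) \<Rightarrow> bool" where
  "is_partition_mult N k \<longleftrightarrow>
     (\<forall>i. k i \<noteq> 0 \<longrightarrow> 1 \<le> i \<and> i \<le> N) \<and> (\<Sum>i=1..N. i * k i) = N"

definition part_length :: "nat \<Rightarrow> (nat \<Rightarrow> nat) \<Rightarrow> nat" where
  "part_length N k = (\<Sum>i=1..N. k i)"

text \<open>\<ell>(\<lambda>*) = largest part of \<lambda>.\<close>
definition largest_part :: "(nat \<Rightarrow> nat) \<Rightarrow> nat" where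
  "largest_part k = Max {i. k i \<noteq> 0}"

definition permissible :: "nat \<Rightarrow> nat \<Rightarrow> nat \<Rightarrow> nat \<Rightarrow> (nat \<Rightarrow> nat) \<Rightarrow> bool" where
  "permissible q r K N k \<longleftrightarrow>
     is_partition_mult N k \<and>
     part_length N k \<le> K \<and>
     largest_part k \<le> r - q + 1 \<and>
     real (\<Sum>i=2..N. k i) \<le> real (N - 1) / real r \<and>
     real (N - 1) / real r \<le> real (K - 1) / real q"

end

theory Submission
  imports Defs
begin

definition T :: "nat \<Rightarrow> nat \<Rightarrow> (nat \<Rightarrow> nat) set" where
  "T n m = {f. (\<forall>i\<ge>n. f i = 0) \<and> (\<Sum>i<n. f i) \<le> m}"

lemma T_Suc: "T (Suc n) m = (\<Union>j\<in>{..m}. (\<lambda>f. f(n:=j)) ` T n (m-j))"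
proof (intro equalityI subsetI)
  fix f assume f: "f \<in> T (Suc n) m"
  let ?g = "f(n:=0)"
  have "?g \<in> T n (m - f n)" using f by (auto simp: T_def)
  moreover have "f = ?g(n := f n)" by simp
  moreover have "f n \<le> m" using f by (auto simp: T_def)
  ultimately show "f \<in> (\<Union>j\<in>{..m}. (\<lambda>f. f(n:=j)) ` T n (m-j))" by blast
next
  fix f assume "f \<in> (\<Union>j\<in>{..m}. (\<lambda>f. f(n:=j)) ` T n (m-j))"
  then obtain j g where j: "j \<le> m" and g: "g \<in> T n (m-j)" and fg: "f = g(n:=j)" by blast
  have "(\<Sum>i<n. f i) = (\<Sum>i<n. g i)" using fg by (intro sum.cong) auto
  then show "f \<in> T (Suc n) m" using g j fg by (auto simp: T_def)
qed

lemma card_T: "finite (T n m) \<and> card (T n m) = (m + n) choose n"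
proof (induction n arbitrary: m)
  case 0
  have "T 0 m = {\<lambda>_. 0}" by (auto simp: T_def)
  then show ?case by simp
next
  case (Suc n)
  have inj: "inj_on (\<lambda>f. f(n:=j)) (T n k)" for j k
  proof (rule inj_onI)
    fix f g assume f: "f \<in> T n k" and g: "g \<in> T n k" and e: "f(n:=j) = g(n:=j)"
    show "f = g"
    proof
      fix x show "f x = g x"
      proof (cases "x = n")
        case True then show ?thesis using f g by (simp add: T_def)
      next
        case False then show ?thesis using fun_cong[OF e, of x] by simp
      qed
    qed
  qed
  have disj: "((\<lambda>f. f(n:=i)) ` T n (m-i)) \<inter> ((\<lambda>f. f(n:=j)) ` T n (m-j)) = {}" if "i \<noteq> j" for i j
  proof (rule ccontr)
    assume "\<not> ?thesis"
    then obtain f g where "f(n:=i) = g(n:=j)" by blast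
    from fun_cong[OF this, of n] that show False by simp
  qed
  have fin: "finite (T (Suc n) m)" unfolding T_Suc using Suc by auto
  have "card (T (Suc n) m) = (\<Sum>j\<le>m. card ((\<lambda>f. f(n:=j)) ` T n (m-j)))"
    unfolding T_Suc by (rule card_UN_disjoint) (use Suc disj in simp_all)
  also have "\<dots> = (\<Sum>j\<le>m. (m - j + n) choose n)"
    using Suc by (simp add: card_image[OF inj])
  also have "\<dots> = (\<Sum>j\<le>m. (j + n) choose n)"
    by (rule sum.reindex_bij_witness[where i="\<lambda>j. m - j" and j="\<lambda>j. m - j"]) auto
  also have "\<dots> = (\<Sum>j\<le>m. (n + j) choose j)"
    by (intro sum.cong refl) (metis add.commute binomial_symmetric le_add2 add_diff_cancel_right')
  also have "\<dots> = Suc (n + m) choose m" by (rule sum_choose_lower)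
  also have "\<dots> = Suc (n + m) choose Suc n" by (subst binomial_symmetric) auto
  also have "\<dots> = (m + Suc n) choose Suc n" by (simp add: add.commute)
  finally show ?case using fin by simp
qed


lemma sum_same_supp:
  assumes "finite A" "finite B" "\<And>i. i \<in> A - B \<Longrightarrow> g i = 0" "\<And>i. i \<in> B - A \<Longrightarrow> g i = 0"
  shows "sum g A = sum g B"
proof -
  have "sum g A = sum g (A \<inter> B)" by (rule sum.mono_neutral_right) (use assms in auto)
  also have "\<dots> = sum g B" by (rule sum.mono_neutral_left) (use assms in auto)
  finally show ?thesis .
qed

lemma sum_shift2: "sum g {2..<n+2} = (\<Sum>j<n. g (j+2::nat))"
  by (induction n) (auto simp: add.commute)

definition Aset :: "nat \<Rightarrow> nat \<Rightarrow> nat \<Rightarrow> (nat \<Rightarrow> nat) set" where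
  "Aset N n m = {k. is_partition_mult N k \<and> (\<forall>i. k i \<noteq> 0 \<longrightarrow> i \<le> Suc n) \<and> (\<Sum>i=2..N. k i) \<le> m}"

lemma card_Aset:
  assumes N1: "1 \<le> N" and nm: "(n+1)*m \<le> N - 1"
  shows "card (Aset N n m) = (m + n) choose n"
proof -
  define \<phi> where "\<phi> k = (\<lambda>i. if i < n then k (i+2) else 0)" for k :: "nat \<Rightarrow> nat"
  define \<psi> where "\<psi> f = (\<lambda>i. if i = 1 then N - (\<Sum>j<n. (j+2) * f j) else if 2 \<le> i \<and> i < n+2 then f (i-2) else 0)"
    for f :: "nat \<Rightarrow> nat"
  have splitN: "(\<Sum>i=1..N. g i) = g 1 + (\<Sum>i=2..N. g i)" for g :: "nat \<Rightarrow> nat"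
    using N1 by (metis Suc_1 sum.atLeast_Suc_atMost)
  have Ak: "(\<Sum>i=2..N. g i * k i) = (\<Sum>j<n. g (j+2) * k (j+2))"
    if k: "k \<in> Aset N n m" for k g
  proof -
    have sk: "k i \<noteq> 0 \<Longrightarrow> 1 \<le> i \<and> i \<le> N \<and> i < n + 2" for i
      using k unfolding Aset_def is_partition_mult_def by (simp add: less_Suc_eq_le)
    have sk0: "k i \<noteq> 0 \<Longrightarrow> 1 \<le> i \<and> i \<le> N \<and> i \<le> Suc n" for i
      using k by (auto simp: Aset_def is_partition_mult_def)
    have "(\<Sum>i=2..N. g i * k i) = (\<Sum>i=2..<n+2. g i * k i)"
      by (rule sum_same_supp) (use sk in \<open>force+\<close>)
    then show ?thesis by (simp only: sum_shift2)
  qed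
  have b1: "\<psi> (\<phi> k) = k" if k: "k \<in> Aset N n m" for k
  proof
    fix x
    have supp: "k i \<noteq> 0 \<Longrightarrow> 1 \<le> i \<and> i \<le> N \<and> i \<le> Suc n" for i
      using k by (auto simp: Aset_def is_partition_mult_def)
    have "N = (\<Sum>i=1..N. i * k i)" using k by (simp add: Aset_def is_partition_mult_def)
    also have "\<dots> = k 1 + (\<Sum>j<n. (j+2) * k (j+2))"
      using splitN[of "\<lambda>i. i * k i"] Ak[OF k, of "\<lambda>i. i"] by simp
    finally have N: "N = k 1 + (\<Sum>j<n. (j+2) * k (j+2))" .
    consider "x = 1" | "x = 0" | "2 \<le> x \<and> x < n+2" | "x \<ge> n+2" by linarith
    then show "\<psi> (\<phi> k) x = k x"
    proof cases
      case 1 then show ?thesis using N by (simp add: \<psi>_def \<phi>_def)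
    next
      case 2
      have "k 0 = 0" using supp[of 0] by (cases "k 0 = 0") simp_all
      then show ?thesis using 2 by (simp add: \<psi>_def \<phi>_def)
    next
      case 3
      then have "x - 2 < n" "x - 2 + 2 = x" by auto
      then show ?thesis using 3 by (simp add: \<psi>_def \<phi>_def)
    next
      case 4
      have "k x = 0" using supp[of x] 4 by (cases "k x = 0") simp_all
      then show ?thesis using 4 by (simp add: \<psi>_def \<phi>_def)
    qed
  qed
  have b2: "\<phi> (\<psi> f) = f" if f: "f \<in> T n m" for f
  proof
    fix x show "\<phi> (\<psi> f) x = f x" using f by (auto simp: \<psi>_def \<phi>_def T_def)
  qed
  have b3: "\<phi> k \<in> T n m" if k: "k \<in> Aset N n m" for k
  proof -
    have "(\<Sum>i<n. \<phi> k i) = (\<Sum>j<n. 1 * k (j+2))" by (simp add: \<phi>_def)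
    also have "\<dots> = (\<Sum>i=2..N. 1 * k i)" using Ak[OF k, of "\<lambda>_. 1"] by simp
    also have "\<dots> \<le> m" using k by (simp add: Aset_def)
    finally show ?thesis by (simp add: T_def \<phi>_def)
  qed
  have b4: "\<psi> f \<in> Aset N n m" if f: "f \<in> T n m" for f
  proof -
    define S where "S = (\<Sum>j<n. (j+2) * f j)"
    have "S \<le> (\<Sum>j<n. (n+1) * f j)" unfolding S_def by (intro sum_mono mult_right_mono) simp_all
    also have "\<dots> = (n+1) * (\<Sum>j<n. f j)" by (simp add: sum_distrib_left)
    also have "\<dots> \<le> (n+1) * m" using f unfolding T_def by (intro mult_left_mono) simp_all
    finally have S: "S \<le> N - 1" using nm by simp
    have jterm: "j + 2 \<le> N" if "j < n" "f j \<noteq> 0" for j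
    proof -
      have "(j + 2) * 1 \<le> (j+2) * f j" using that by (intro mult_left_mono) simp_all
      also have "\<dots> \<le> S" unfolding S_def by (rule member_le_sum) (use that in auto)
      finally show ?thesis using S N1 by simp
    qed
    have supp: "\<psi> f i \<noteq> 0 \<Longrightarrow> 1 \<le> i \<and> i \<le> N \<and> i \<le> Suc n" for i
    proof -
      assume ne: "\<psi> f i \<noteq> 0"
      show ?thesis
      proof (cases "i = 1")
        case True then show ?thesis using N1 by simp
      next
        case False
        then have i: "2 \<le> i \<and> i < n+2" and fi: "f (i-2) \<noteq> 0" using ne by (auto simp: \<psi>_def split: if_splits)
        then have "i - 2 < n" by linarith
        from jterm[OF this fi] i show ?thesis by linarith
      qed
    qed
    have supp': "\<psi> f i \<noteq> 0 \<Longrightarrow> 1 \<le> i \<and> i \<le> N \<and> i < n + 2" for i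
      using supp[of i] by (simp add: less_Suc_eq_le)
    have s2: "(\<Sum>i=2..N. g i * \<psi> f i) = (\<Sum>j<n. g (j+2) * f j)" for g
    proof -
      have "(\<Sum>i=2..N. g i * \<psi> f i) = (\<Sum>i=2..<n+2. g i * \<psi> f i)"
        by (rule sum_same_supp) (use supp' in \<open>force+\<close>)
      also have "\<dots> = (\<Sum>j<n. g (j+2) * \<psi> f (j+2))" by (simp only: sum_shift2)
      also have "\<dots> = (\<Sum>j<n. g (j+2) * f j)" by (intro sum.cong refl) (simp add: \<psi>_def)
      finally show ?thesis .
    qed
    have "(\<Sum>i=1..N. i * \<psi> f i) = \<psi> f 1 + (\<Sum>i=2..N. i * \<psi> f i)" using splitN by simp
    also have "\<dots> = (N - S) + S" using s2[of "\<lambda>i. i"] by (simp add: \<psi>_def S_def)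
    also have "\<dots> = N" using S by simp
    finally have P: "is_partition_mult N (\<psi> f)" using supp by (simp add: is_partition_mult_def)
    have "(\<Sum>i=2..N. \<psi> f i) = (\<Sum>j<n. f j)" using s2[of "\<lambda>_. 1"] by simp
    also have "\<dots> \<le> m" using f by (simp add: T_def)
    finally show ?thesis using P supp by (simp add: Aset_def)
  qed
  have "bij_betw \<phi> (Aset N n m) (T n m)"
    by (rule bij_betw_byWitness[where f'=\<psi>]) (use b1 b2 b3 b4 in auto)
  then have "card (Aset N n m) = card (T n m)" by (rule bij_betw_same_card)
  then show ?thesis using card_T by simp
qed


theorem proposition3:
  fixes q r K N :: nat
  assumes "coprime q r" and "0 < q" and "q \<le> r"
    and "1 \<le> N" and "N \<le> K" and "[N = 1] (mod r)"
  shows "card {k. permissible q r K N k} = ((N - 1) div r + (r - q)) choose (r - q)"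
proof -
  define n where "n = r - q"
  define m where "m = (N - 1) div r"
  have r0: "0 < r" using assms by linarith
  have "r dvd (N - 1)" using assms(6) assms(4) by (simp add: cong_altdef_nat)
  then have Nm: "N - 1 = m * r" unfolding m_def by simp
  have "n + 1 \<le> r" unfolding n_def using assms(2,3) by simp
  then have "(n+1)*m \<le> r * m" by (rule mult_right_mono) simp
  then have nm: "(n+1)*m \<le> N - 1" unfolding Nm by (simp add: mult.commute)
  have rdiv: "real (N - 1) / real r = real m" using r0 Nm by simp
  have last: "real m \<le> real (K - 1) / real q"
  proof -
    have "m * q \<le> m * r" using assms(3) by simp
    also have "\<dots> \<le> K - 1" using Nm assms(5) by linarith
    finally have "real m * real q \<le> real (K - 1)" by (metis of_nat_le_iff of_nat_mult)
    then show ?thesis using assms(2) by (simp add: pos_le_divide_eq)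
  qed
  have eq: "{k. permissible q r K N k} = Aset N n m"
  proof (intro equalityI subsetI)
    fix k assume "k \<in> {k. permissible q r K N k}"
    then have P: "is_partition_mult N k" and L: "largest_part k \<le> r - q + 1"
      and S: "real (\<Sum>i=2..N. k i) \<le> real (N - 1) / real r"
      by (auto simp: permissible_def)
    have fin: "finite {i. k i \<noteq> 0}"
      using P unfolding is_partition_mult_def by (metis (mono_tags) finite_atLeastAtMost finite_subset mem_Collect_eq subsetI atLeastAtMost_iff)
    have "\<forall>i. k i \<noteq> 0 \<longrightarrow> i \<le> Suc n"
    proof (intro allI impI)
      fix i assume "k i \<noteq> 0"
      then have "i \<le> largest_part k" unfolding largest_part_def using fin by (simp add: Max_ge)
      then show "i \<le> Suc n" using L n_def by simp
    qed
    moreover have "real (\<Sum>i=2..N. k i) \<le> real m" using S rdiv by (simp only:)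
    then have "(\<Sum>i=2..N. k i) \<le> m" by (simp only: of_nat_le_iff)
    ultimately show "k \<in> Aset N n m" using P by (simp add: Aset_def)
  next
    fix k assume "k \<in> Aset N n m"
    then have P: "is_partition_mult N k" and sup: "\<forall>i. k i \<noteq> 0 \<longrightarrow> i \<le> Suc n"
      and S: "(\<Sum>i=2..N. k i) \<le> m" by (auto simp: Aset_def)
    have fin: "finite {i. k i \<noteq> 0}"
      using P unfolding is_partition_mult_def by (metis (mono_tags) finite_atLeastAtMost finite_subset mem_Collect_eq subsetI atLeastAtMost_iff)
    have ne: "{i. k i \<noteq> 0} \<noteq> {}"
    proof
      assume "{i. k i \<noteq> 0} = {}"
      then have "\<forall>i. k i = 0" by auto
      then show False using P assms(4) by (simp add: is_partition_mult_def)
    qed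
    have L: "largest_part k \<le> r - q + 1"
      unfolding largest_part_def using fin ne sup n_def by (simp add: Max_le_iff)
    have "part_length N k \<le> (\<Sum>i=1..N. i * k i)"
      unfolding part_length_def by (intro sum_mono) simp
    also have "\<dots> = N" using P by (simp add: is_partition_mult_def)
    finally have PL: "part_length N k \<le> K" using assms(5) by simp
    have "real (\<Sum>i=2..N. k i) \<le> real m" using S by (simp only: of_nat_le_iff)
    then have "real (\<Sum>i=2..N. k i) \<le> real (N - 1) / real r" using rdiv by (simp only:)
    then show "k \<in> {k. permissible q r K N k}"
      using P L PL last rdiv by (simp add: permissible_def)
  qed
  show ?thesis unfolding eq using card_Aset[OF assms(4) nm] by (simp add: m_def n_def)
qed

end
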